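(* Let $A\in\mathbb{R}^{m\times n}$, $b\in\mathbb{R}^m$ with $Ax=b$ consistent, and let $\{x^k\}_{k\ge0}$ be generated by the RIM-AS algorithm described in the context with $\ell=\infty$ and $\Omega=\{I_m\}$ (i.e. $S_k=I_m$ for all $k$). Let $r^k=Ax^k-b$. Then for each $k\ge0$, $$\operatorname{span}\{A^\top r^0,\ldots,A^\top r^k\}=\mathcal{K}_{k+1}(A^\top A,A^\top r^0).$$
   Context: RIM-AS algorithm with $\ell=\infty$ and $S_k=I_m$: start from $x^0\in\operatorname{Range}(A^\top)$; for $k=0,1,\dots$ (as long as $Ax^k\neq b$): set $M_k=(x^0-x^k,\dots,x^{k-1}-x^k,-A^\top(Ax^k-b))\in\mathbb{R}^{n\times(k+1)}$, $\gamma_k=\|Ax^k-b\|_2^2$, let $s_k$ solve $M_k^\top M_ks_k=\gamma_ke$ with $e$ the last standard unit vector of $\mathbb{R}^{k+1}$, and set $x^{k+1}=x^k+M_ks_k$. For $B\in\mathbb{R}^{n\times n}$, $r\in\mathbb{R}^n$, the Krylov subspace is $\mathcal{K}_p(B,r)=\operatorname{span}\{r,Br,\dots,B^{p-1}r\}$. *)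

theory Defs
  imports "HOL-Analysis.Analysis"
begin

text \<open>Krylov subspace K_p(B,r) = span {r, Br, ..., B^(p-1) r}.\<close>
definition krylov :: "real^'n^'n \<Rightarrow> real^'n \<Rightarrow> nat \<Rightarrow> (real^'n) set" where
  "krylov B r p = span {((\<lambda>v. B *v v) ^^ i) r | i. i < p}"

text \<open>Columns of M_k = (x^0 - x^k, ..., x^(k-1) - x^k, -A^T(A x^k - b)), indexed j = 0..k.\<close>
definition rimas_col :: "real^'n^'m \<Rightarrow> real^'m \<Rightarrow> (nat \<Rightarrow> real^'n) \<Rightarrow> nat \<Rightarrow> nat \<Rightarrow> real^'n" where
  "rimas_col A b x k j = (if j < k then x j - x k else - (transpose A *v (A *v x k - b)))"

text \<open>M_k s for s in R^(k+1) (coordinates s 0, ..., s k).\<close>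
definition rimas_Ms :: "real^'n^'m \<Rightarrow> real^'m \<Rightarrow> (nat \<Rightarrow> real^'n) \<Rightarrow> nat \<Rightarrow> (nat \<Rightarrow> real) \<Rightarrow> real^'n" where
  "rimas_Ms A b x k s = (\<Sum>j\<le>k. s j *\<^sub>R rimas_col A b x k j)"

text \<open>One RIM-AS step (l = infinity, S_k = I_m): s solves M_k^T M_k s = gamma_k e with
  gamma_k = ||A x^k - b||^2, e the last unit vector of R^(k+1), and x^(k+1) = x^k + M_k s.\<close>
definition rimas_step :: "real^'n^'m \<Rightarrow> real^'m \<Rightarrow> (nat \<Rightarrow> real^'n) \<Rightarrow> nat \<Rightarrow> bool" where
  "rimas_step A b x k \<longleftrightarrow>
     (\<exists>s :: nat \<Rightarrow> real.
        (\<forall>i\<le>k. rimas_col A b x k i \<bullet> rimas_Ms A b x k s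
                 = (if i = k then (norm (A *v x k - b))\<^sup>2 else 0))
      \<and> x (Suc k) = x k + rimas_Ms A b x k s)"

end

theory Submission
  imports Defs
begin

theorem lemma4p2:
  fixes A :: "real^'n^'m" and b :: "real^'m" and x :: "nat \<Rightarrow> real^'n"
  assumes consistent: "\<exists>z. A *v z = b"
    and x0: "x 0 \<in> range (\<lambda>y. transpose A *v y)"
    and iter: "\<And>k. A *v x k \<noteq> b \<Longrightarrow> rimas_step A b x k"
    and generated: "\<forall>j<k. A *v x j \<noteq> b"
  shows "span ((\<lambda>j. transpose A *v (A *v x j - b)) ` {0..k})
           = krylov (transpose A ** A) (transpose A *v (A *v x 0 - b)) (Suc k)"
proof -
  obtain z where z: "A *v z = b" using consistent by blast
  define T where "T = transpose A"
  define B where "B = T ** A"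
  define g where "g j = T *v (A *v x j - b)" for j
  define e where "e j = x j - z" for j
  define G where "G j = span (g ` {..<j})" for j
  define P where "P i = ((\<lambda>v. B *v v) ^^ i) (g 0)" for i
  define K where "K j = span (P ` {..<j})" for j
  define \<gamma> where "\<gamma> j = (norm (A *v x j - b))^2" for j
  define d where "d j = x (Suc j) - x j" for j
  define X where "X j = span ((\<lambda>l. x l - x 0) ` {..j})" for j
  have Kdef: "krylov B (g 0) j = K j" for j
    unfolding krylov_def K_def P_def by (rule arg_cong[where f=span]) auto
  have linB: "linear ((*v) B)" by (rule matrix_vector_mul_linear)
  have Be: "B *v e j = g j" for j
    unfolding B_def g_def e_def T_def
    by (simp add: matrix_vector_mul_assoc[symmetric] matrix_vector_mult_diff_distrib z)
  have Bdiff: "B *v (x j - x i) = g j - g i" for i j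
  proof -
    have "x j - x i = e j - e i" by (simp add: e_def)
    then show ?thesis using Be by (simp add: matrix_vector_mult_diff_distrib)
  qed
  have ge: "g j \<bullet> e j = \<gamma> j" for j
  proof -
    have "g j \<bullet> e j = (A *v x j - b) \<bullet> (A *v e j)"
      unfolding g_def T_def by (simp add: dot_lmul_matrix)
    also have "A *v e j = A *v x j - b" unfolding e_def by (simp add: matrix_vector_mult_diff_distrib z)
    finally show ?thesis unfolding \<gamma>_def by (simp add: power2_norm_eq_inner)
  qed
  have gpos: "\<gamma> j > 0" if "j < k" for j
    using generated that unfolding \<gamma>_def by auto
  have "\<forall>j. \<exists>s. j < k \<longrightarrow>
        (\<forall>i\<le>j. rimas_col A b x j i \<bullet> rimas_Ms A b x j s
                 = (if i = j then (norm (A *v x j - b))\<^sup>2 else 0))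
      \<and> x (Suc j) = x j + rimas_Ms A b x j s"
    using iter generated unfolding rimas_step_def by blast
  then obtain S where S: "\<And>j. j < k \<Longrightarrow>
        (\<forall>i\<le>j. rimas_col A b x j i \<bullet> rimas_Ms A b x j (S j)
                 = (if i = j then (norm (A *v x j - b))\<^sup>2 else 0))
      \<and> x (Suc j) = x j + rimas_Ms A b x j (S j)"
    by metis
  have colg: "rimas_col A b x j j = - g j" for j
    unfolding rimas_col_def g_def T_def by simp
  have coll: "l < j \<Longrightarrow> rimas_col A b x j l = x l - x j" for l j
    unfolding rimas_col_def by simp
  have dM: "d j = rimas_Ms A b x j (S j)" if "j < k" for j
    using S[OF that] unfolding d_def by simp
  have C1: "(x i - x j) \<bullet> d j = 0" if "j < k" "i \<le> j" for i j
  proof (cases "i = j")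
    case False
    then have "i < j" using that by simp
    have "rimas_col A b x j i \<bullet> rimas_Ms A b x j (S j) = 0"
      using S[OF that(1)] \<open>i < j\<close> by auto
    then show ?thesis using dM[OF that(1)] coll[OF \<open>i < j\<close>] by simp
  qed simp
  have C2: "g j \<bullet> d j = - \<gamma> j" if "j < k" for j
    using S[OF that] dM[OF that] colg[of j] unfolding \<gamma>_def by auto
  have C3: "d j = (\<Sum>l<j. S j l *\<^sub>R (x l - x j)) - S j j *\<^sub>R g j" if "j < k" for j
  proof -
    have "d j = (\<Sum>l\<le>j. S j l *\<^sub>R rimas_col A b x j l)"
      using dM[OF that] unfolding rimas_Ms_def by simp
    also have "\<dots> = (\<Sum>l<j. S j l *\<^sub>R rimas_col A b x j l) + S j j *\<^sub>R rimas_col A b x j j"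
      by (simp add: lessThan_Suc_atMost[symmetric])
    also have "(\<Sum>l<j. S j l *\<^sub>R rimas_col A b x j l) = (\<Sum>l<j. S j l *\<^sub>R (x l - x j))"
      by (rule sum.cong) (auto simp: coll)
    finally show ?thesis by (simp add: colg)
  qed
  have Xgen: "x l - x 0 \<in> X j" if "l \<le> j" for l j
    unfolding X_def using that by (intro span_base) auto
  have Xdiff: "x l - x i \<in> X j" if "l \<le> j" "i \<le> j" for l i j
  proof -
    have "x l - x i = (x l - x 0) - (x i - x 0)" by simp
    then show ?thesis using Xgen[OF that(1)] Xgen[OF that(2)] by (metis span_diff X_def span_span)
  qed
  have D1: "d j \<bullet> v = 0" if "j < k" "v \<in> X j" for j v
  proof -
    have "orthogonal (d j) v"
    proof (rule orthogonal_to_span)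
      show "v \<in> span ((\<lambda>l. x l - x 0) ` {..j})" using that(2) unfolding X_def .
    next
      fix y assume "y \<in> (\<lambda>l. x l - x 0) ` {..j}"
      then obtain l where l: "l \<le> j" "y = x l - x 0" by auto
      have "y = (x l - x j) - (x 0 - x j)" using l by simp
      then have "d j \<bullet> y = (x l - x j) \<bullet> d j - (x 0 - x j) \<bullet> d j"
        by (simp add: inner_diff_right inner_commute)
      also have "\<dots> = 0" using C1[OF that(1) l(1)] C1[OF that(1), of 0] by simp
      finally show "orthogonal (d j) y" unfolding orthogonal_def .
    qed
    then show ?thesis unfolding orthogonal_def .
  qed
  have D2: "S j j \<noteq> 0" if "j < k" for j
  proof
    assume S0: "S j j = 0"
    have "d j \<bullet> d j = (\<Sum>l\<le>j. S j l * (rimas_col A b x j l \<bullet> rimas_Ms A b x j (S j)))"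
      using dM[OF that] by (simp add: rimas_Ms_def inner_sum_left)
    also have "\<dots> = (\<Sum>l\<le>j. S j l * (if l = j then \<gamma> j else 0))"
      by (rule sum.cong) (use S[OF that] in \<open>auto simp: \<gamma>_def\<close>)
    also have "\<dots> = S j j * \<gamma> j" by (simp add: if_distrib cong: if_cong)
    finally have "d j = 0" using S0 by simp
    then show False using C2[OF that] gpos[OF that] by simp
  qed
  have D3: "g j \<in> X (Suc j)" if "j < k" for j
  proof -
    have eq: "S j j *\<^sub>R g j = (\<Sum>l<j. S j l *\<^sub>R (x l - x j)) - d j"
      using C3[OF that] by simp
    have "(\<Sum>l<j. S j l *\<^sub>R (x l - x j)) \<in> X (Suc j)"
      unfolding X_def by (intro span_sum span_mul) (use Xdiff in \<open>auto simp: X_def\<close>)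
    moreover have "d j \<in> X (Suc j)" unfolding d_def by (rule Xdiff) auto
    ultimately have "S j j *\<^sub>R g j \<in> X (Suc j)" unfolding eq X_def by (rule span_diff)
    then have "(1 / S j j) *\<^sub>R (S j j *\<^sub>R g j) \<in> X (Suc j)" unfolding X_def by (rule span_mul)
    then show ?thesis using D2[OF that] by simp
  qed
  have Xmono: "X i \<subseteq> X j" if "i \<le> j" for i j
    unfolding X_def by (rule span_mono) (use that in auto)
  have E: "\<forall>i<j. g i \<bullet> e j = 0" if "j \<le> k" for j
    using that
  proof (induction j)
    case 0
    then show ?case by simp
  next
    case (Suc j)
    then have jk: "j < k" by simp
    have es: "e (Suc j) = e j + d j" by (simp add: e_def d_def)
    show ?case
    proof (intro allI impI)
      fix i assume "i < Suc j"
      show "g i \<bullet> e (Suc j) = 0"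
      proof (cases "i = j")
        case True
        then show ?thesis using es ge[of j] C2[OF jk] by (simp add: inner_add_right)
      next
        case False
        then have ij: "i < j" using \<open>i < Suc j\<close> by simp
        have "g i \<in> X j" using D3[of i] ij jk Xmono[of "Suc i" j] by auto
        then have "g i \<bullet> d j = 0" using D1[OF jk, of "g i"] by (metis inner_commute)
        then show ?thesis using es Suc ij by (simp add: inner_add_right)
      qed
    qed
  qed
  have E': "v \<bullet> e j = 0" if "j \<le> k" "v \<in> G j" for j v
  proof -
    have "orthogonal (e j) v"
    proof (rule orthogonal_to_span[of v "g ` {..<j}"])
      show "v \<in> span (g ` {..<j})" using that(2) unfolding G_def .
    next
      fix y assume "y \<in> g ` {..<j}"
      then obtain i where i: "i < j" "y = g i" by blast
      have "g i \<bullet> e j = 0" using E[OF that(1)] i(1) by blast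
      then show "orthogonal (e j) y" unfolding orthogonal_def i(2) by (simp only: inner_commute)
    qed
    then show ?thesis unfolding orthogonal_def by (simp only: inner_commute)
  qed
  have gnot: "g j \<notin> G j" if "j < k" for j
  proof
    assume "g j \<in> G j"
    then have "g j \<bullet> e j = 0" using E'[of j "g j"] that by simp
    then show False using ge[of j] gpos[OF that] by simp
  qed
  have Gsuc: "g ` {..<Suc j} = insert (g j) (g ` {..<j})" for j
    by (simp add: lessThan_Suc)
  have Ind: "independent (g ` {..<j}) \<and> card (g ` {..<j}) = j" if "j \<le> k" for j
    using that
  proof (induction j)
    case 0
    then show ?case by (simp add: independent_empty)
  next
    case (Suc j)
    then have jk: "j < k" by simp
    have IH: "independent (g ` {..<j})" "card (g ` {..<j}) = j" using Suc jk by simp_all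
    have gn: "g j \<notin> span (g ` {..<j})" using gnot[OF jk] unfolding G_def .
    have nm: "g j \<notin> g ` {..<j}"
    proof
      assume "g j \<in> g ` {..<j}"
      then have "g j \<in> span (g ` {..<j})" by (rule span_base)
      with gn show False by contradiction
    qed
    have "independent (insert (g j) (g ` {..<j}))" by (rule independent_insertI[OF gn IH(1)])
    moreover have "card (insert (g j) (g ` {..<j})) = Suc j"
      using card_insert_disjoint[OF finite_imageI[OF finite_lessThan] nm] IH(2) by simp
    ultimately show ?case unfolding Gsuc by simp
  qed
  have dimG: "dim (G k) = k"
    unfolding G_def using dim_span_eq_card_independent[of "g ` {..<k}"] Ind[of k] by simp
  have Gmono: "G i \<subseteq> G j" if "i \<le> j" for i j
    unfolding G_def by (rule span_mono) (use that in auto)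
  have gG: "g i \<in> G j" if "i < j" for i j
    unfolding G_def using that by (intro span_base) auto
  have F1: "\<forall>l\<le>j. x l - x 0 \<in> G j" if "j \<le> k" for j
    using that
  proof (induction j)
    case 0
    then show ?case by (simp add: G_def span_zero)
  next
    case (Suc j)
    then have jk: "j < k" by simp
    have IH: "x l - x 0 \<in> G (Suc j)" if "l \<le> j" for l
      using Suc jk that Gmono[of j "Suc j"] by auto
    have dG: "d j \<in> G (Suc j)"
    proof -
      have "(\<Sum>l<j. S j l *\<^sub>R (x l - x j)) \<in> G (Suc j)"
      proof -
        have "x l - x j \<in> G (Suc j)" if "l < j" for l
        proof -
          have "x l - x j = (x l - x 0) - (x j - x 0)" by simp
          have a: "x l - x 0 \<in> span (g ` {..<Suc j})" using IH[of l] that unfolding G_def by simp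
          have c: "x j - x 0 \<in> span (g ` {..<Suc j})" using IH[of j] unfolding G_def by simp
          show ?thesis using span_diff[OF a c] unfolding G_def by simp
        qed
        then show ?thesis unfolding G_def by (intro span_sum span_mul) (auto simp: G_def)
      qed
      moreover have "S j j *\<^sub>R g j \<in> G (Suc j)" unfolding G_def
        by (intro span_mul span_base) auto
      ultimately show ?thesis using C3[OF jk] unfolding G_def by (simp add: span_diff)
    qed
    have "x (Suc j) - x 0 = (x j - x 0) + d j" by (simp add: d_def)
    moreover have "(x j - x 0) + d j \<in> G (Suc j)" using IH[of j] dG unfolding G_def
      by (intro span_add) simp_all
    ultimately have "x (Suc j) - x 0 \<in> G (Suc j)" by (simp add: algebra_simps)
    then show ?case using IH by (auto simp: le_Suc_eq)
  qed
  have PS: "P (Suc i) = B *v P i" for i by (simp add: P_def)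
  have KB: "B *v v \<in> K (Suc j)" if "v \<in> K j" for v j
  proof -
    have "B *v v \<in> (*v) B ` K j" using that by blast
    also have "\<dots> = span ((*v) B ` P ` {..<j})" unfolding K_def
      using span_linear_image[OF linB] by simp
    also have "\<dots> \<subseteq> K (Suc j)" unfolding K_def
      by (rule span_mono) (auto simp: PS[symmetric] image_iff)
    finally show ?thesis .
  qed
  have Kmono: "K i \<subseteq> K j" if "i \<le> j" for i j
    unfolding K_def by (rule span_mono) (use that in auto)
  have g0K: "g 0 \<in> K (Suc j)" for j
    unfolding K_def by (rule span_base) (auto simp: P_def image_iff intro!: bexI[of _ 0])
  have F2: "G j \<subseteq> K j" if "j \<le> Suc k" for j
    using that
  proof (induction j)
    case 0
    then show ?case by (simp add: G_def K_def)
  next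
    case (Suc j)
    then have jk: "j \<le> k" by simp
    have "x j - x 0 \<in> K j" using F1[OF jk] Suc jk by auto
    then have "B *v (x j - x 0) \<in> K (Suc j)" by (rule KB)
    then have "g 0 + B *v (x j - x 0) \<in> K (Suc j)" using g0K unfolding K_def
      by (simp add: span_add)
    then have gj: "g j \<in> K (Suc j)" by (simp add: Bdiff)
    have "g ` {..<Suc j} \<subseteq> K (Suc j)"
    proof
      fix v assume "v \<in> g ` {..<Suc j}"
      then obtain i where i: "i < Suc j" "v = g i" by auto
      show "v \<in> K (Suc j)"
      proof (cases "i = j")
        case True then show ?thesis using gj i by simp
      next
        case False
        then have "g i \<in> G j" using i gG by simp
        then show ?thesis using Suc jk Kmono[of j "Suc j"] i by auto
      qed
    qed
    then show ?case unfolding G_def K_def by (rule span_minimal) simp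
  qed
  have dimK: "dim (K j) \<le> j" for j
  proof -
    have "dim (K j) \<le> card (P ` {..<j})" unfolding K_def by (rule dim_le_card) auto
    also have "\<dots> \<le> j" using card_image_le[of "{..<j}" P] by simp
    finally show ?thesis .
  qed
  have spanG: "span (G j) = G j" for j by (simp add: G_def)
  have spanK: "span (K j) = K j" for j by (simp add: K_def)
  have GK: "G k = K k"
    using dim_eq_span[of "G k" "K k"] F2[of k] dimK[of k] dimG spanG spanK by simp
  have lhs: "span ((\<lambda>j. transpose A *v (A *v x j - b)) ` {0..k}) = G (Suc k)"
  proof -
    have h1: "(\<lambda>j. transpose A *v (A *v x j - b)) = g" unfolding g_def T_def by (rule refl)
    have h2: "{0..k} = {..<Suc k}" by auto
    show ?thesis unfolding G_def h1 h2 by (rule refl)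
  qed
  have rhs: "krylov (transpose A ** A) (transpose A *v (A *v x 0 - b)) (Suc k) = K (Suc k)"
  proof -
    have h1: "transpose A ** A = B" unfolding B_def T_def by (rule refl)
    have h2: "transpose A *v (A *v x 0 - b) = g 0" unfolding g_def T_def by (rule refl)
    show ?thesis unfolding h1 h2 by (rule Kdef)
  qed
  have main: "G (Suc k) = K (Suc k)"
  proof (cases "A *v x k = b")
    case False
    then have gk: "g k \<notin> G k"
      using E'[of k "g k"] ge[of k] unfolding \<gamma>_def by auto
    have gn: "g k \<notin> span (g ` {..<k})" using gk unfolding G_def .
    have nm: "g k \<notin> g ` {..<k}"
    proof
      assume "g k \<in> g ` {..<k}"
      then have "g k \<in> span (g ` {..<k})" by (rule span_base)
      with gn show False by contradiction
    qed
    have "independent (g ` {..<Suc k})" unfolding Gsuc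
      using Ind[of k] by (intro independent_insertI[OF gn]) simp
    moreover have "card (g ` {..<Suc k}) = Suc k" unfolding Gsuc
      using card_insert_disjoint[OF finite_imageI[OF finite_lessThan] nm] Ind[of k] by simp
    ultimately have "dim (G (Suc k)) = Suc k"
      using dim_span_eq_card_independent unfolding G_def by metis
    then show ?thesis
      using dim_eq_span[of "G (Suc k)" "K (Suc k)"] F2[of "Suc k"] dimK[of "Suc k"] spanG spanK
      by simp
  next
    case True
    then have g0: "g k = 0" by (simp add: g_def)
    have G1: "G (Suc k) = G k" unfolding G_def Gsuc g0 by simp
    have "x k - x 0 \<in> K k" using F1[of k] GK by auto
    then have m: "- (x k - x 0) \<in> K k" unfolding K_def by (rule span_neg)
    have "g 0 = B *v (- (x k - x 0))"
      using Bdiff[of 0 k] g0 by simp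
    then have g0in: "g 0 \<in> (*v) B ` K k" using m by blast
    have sub: "subspace ((*v) B ` K k)"
      using linear_subspace_image[OF linB] subspace_span unfolding K_def by blast
    have "P ` {..<Suc k} \<subseteq> (*v) B ` K k"
    proof
      fix v assume "v \<in> P ` {..<Suc k}"
      then obtain i where i: "i < Suc k" "v = P i" by auto
      show "v \<in> (*v) B ` K k"
      proof (cases i)
        case 0 then show ?thesis using i g0in by (simp add: P_def)
      next
        case (Suc i')
        then have "P i' \<in> K k" using i unfolding K_def by (intro span_base) auto
        then show ?thesis using i Suc PS by auto
      qed
    qed
    then have "K (Suc k) \<subseteq> (*v) B ` K k" unfolding K_def[of "Suc k"]
      using span_minimal sub by blast
    then have "dim (K (Suc k)) \<le> dim ((*v) B ` K k)" by (rule dim_subset)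
    also have "\<dots> \<le> dim (K k)" by (rule dim_image_le[OF linB])
    also have "\<dots> = k" using GK dimG by simp
    finally have "dim (K (Suc k)) \<le> dim (K k)" using GK dimG by simp
    then have "K k = K (Suc k)"
      using dim_eq_span[of "K k" "K (Suc k)"] Kmono[of k "Suc k"] spanK by simp
    then show ?thesis using G1 GK by simp
  qed
  show ?thesis using lhs rhs main by simp
qed
end
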